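(* Let $(U_0,\dots,U_n)$ be the urn process. For $0\le k\le l\le n$, \[ \mathbf E(U_k)=\frac{k(n-k)}{n-1},\qquad \mathbf{Cov}(U_k,U_l)=\frac{k(k-1)(n-l)(n-l-1)}{(n-1)^2(n-2)}. \]
   Context: Urn process: let $n\ge3$. An urn initially contains $n$ black balls. It is emptied in $n$ steps: in each of the first $n-1$ steps a uniformly random pair of balls is removed from the urn and replaced by one red ball; in step $n$ the last remaining ball is removed. $U_k$ is the number of red balls in the urn after $k$ steps, $0\le k\le n$. Equivalently, $(U_k)$ is the Markov chain with $U_0=0$ and $\mathbf P(U_{k+1}=u-1\mid U_k=u)=\binom u2/\binom{n-k}2$, $\mathbf P(U_{k+1}=u\mid U_k=u)=u(n-k-u)/\binom{n-k}2$, $\mathbf P(U_{k+1}=u+1\mid U_k=u)=\binom{n-k-u}2/\binom{n-k}2$ (for $k\le n-2$), and $U_n=0$. *)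

theory Defs
  imports "HOL-Probability.Probability"
begin

text \<open>After k steps the urn holds n - k balls, of which
  u are red; balls are labelled 0..<n-k, the red ones being 0..<u. For k+2 \<le> n a
  uniformly random 2-element subset of the balls is removed and replaced by one red
  ball; the new number of red balls is u + 1 - (number of red balls removed).
  In step n (k = n-1) the last ball is removed, so U_n = 0.\<close>
definition urn_step :: "nat \<Rightarrow> nat \<Rightarrow> nat \<Rightarrow> nat pmf" where
  "urn_step n k u =
     (if k + 2 \<le> n then
        map_pmf (\<lambda>S. u + 1 - card (S \<inter> {..<u}))
          (pmf_of_set {S. S \<subseteq> {..<n - k} \<and> card S = 2})
      else return_pmf 0)"

fun urn_path :: "nat \<Rightarrow> nat \<Rightarrow> nat list pmf" where
  "urn_path n 0 = return_pmf [0]"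
| "urn_path n (Suc k) =
     bind_pmf (urn_path n k) (\<lambda>xs. map_pmf (\<lambda>u'. xs @ [u']) (urn_step n k (last xs)))"

text \<open>The full urn process (U_0, ..., U_n): the list xs with U_k = xs ! k.\<close>
definition urn :: "nat \<Rightarrow> nat list pmf" where
  "urn n = urn_path n n"

definition pmf_cov :: "'a pmf \<Rightarrow> ('a \<Rightarrow> real) \<Rightarrow> ('a \<Rightarrow> real) \<Rightarrow> real" where
  "pmf_cov p X Y =
     measure_pmf.expectation p
       (\<lambda>x. (X x - measure_pmf.expectation p X) * (Y x - measure_pmf.expectation p Y))"

end

theory Submission
  imports Defs
begin


definition T2 :: "nat \<Rightarrow> nat set set" where
  "T2 M = {S. S \<subseteq> {..<M} \<and> card S = 2}"

lemma T2_finite: "finite (T2 M)"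
  unfolding T2_def by (rule finite_subset[of _ "Pow {..<M}"]) auto

lemma T2_nonempty: "M \<ge> 2 \<Longrightarrow> T2 M \<noteq> {}"
proof -
  assume "M \<ge> 2" hence "{0,1} \<in> T2 M" by (auto simp: T2_def)
  thus ?thesis by auto
qed

lemma T2_card: "real (card (T2 M)) = real M * (real M - 1) / 2"
proof -
  have "card (T2 M) = M choose 2" unfolding T2_def using n_subsets[of "{..<M}" 2] by simp
  also have "\<dots> = M * (M - 1) div 2" by (rule choose_two)
  moreover have "even (M * (M - 1))" by auto
  ultimately have "2 * card (T2 M) = M * (M - 1)" by simp
  hence "2 * real (card (T2 M)) = real (M * (M - 1))" by (metis of_nat_mult of_nat_numeral)
  thus ?thesis by (cases M) (auto simp: algebra_simps)
qed

lemma cnt1: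
  assumes "x < M"
  shows "card {S \<in> T2 M. x \<in> S} = M - 1"
proof -
  have "{S \<in> T2 M. x \<in> S} = (\<lambda>y. {x,y}) ` ({..<M} - {x})"
  proof (rule set_eqI, rule iffI)
    fix S assume "S \<in> {S \<in> T2 M. x \<in> S}"
    then have S: "S \<subseteq> {..<M}" "card S = 2" "x \<in> S" unfolding T2_def by auto
    then obtain a b where ab: "S = {a,b}" "a \<noteq> b" by (auto simp: card_2_iff)
    show "S \<in> (\<lambda>y. {x,y}) ` ({..<M} - {x})"
    proof (cases "a = x")
      case True thus ?thesis using ab S by (auto intro!: image_eqI[of _ _ b])
    next
      case False thus ?thesis using ab S by (auto intro!: image_eqI[of _ _ a])
    qed
  next
    fix S assume "S \<in> (\<lambda>y. {x,y}) ` ({..<M} - {x})"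
    thus "S \<in> {S \<in> T2 M. x \<in> S}" using assms unfolding T2_def by auto
  qed
  moreover have "inj_on (\<lambda>y. {x,y}) ({..<M} - {x})"
    by (auto simp: inj_on_def doubleton_eq_iff)
  ultimately show ?thesis using assms by (simp add: card_image)
qed

lemma cnt2:
  assumes "x < M" "y < M" "x \<noteq> y"
  shows "card {S \<in> T2 M. x \<in> S \<and> y \<in> S} = 1"
proof -
  have "{S \<in> T2 M. x \<in> S \<and> y \<in> S} = {{x,y}}"
  proof (rule set_eqI, rule iffI)
    fix S assume "S \<in> {S \<in> T2 M. x \<in> S \<and> y \<in> S}"
    then have S: "card S = 2" "x \<in> S" "y \<in> S" unfolding T2_def by auto
    then obtain a b where ab: "S = {a,b}" "a \<noteq> b" by (auto simp: card_2_iff)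
    show "S \<in> {{x,y}}" using ab S assms by auto
  qed (use assms in \<open>auto simp: T2_def\<close>)
  thus ?thesis by simp
qed

lemma card_as_sum: "finite A \<Longrightarrow> real (card (S \<inter> A)) = (\<Sum>x\<in>A. of_bool (x \<in> S))"
  by (simp add: Int_commute Int_def)

lemma sum1:
  assumes "u \<le> M"
  shows "(\<Sum>S\<in>T2 M. real (card (S \<inter> {..<u}))) = real u * (real M - 1)"
proof -
  have "(\<Sum>S\<in>T2 M. real (card (S \<inter> {..<u}))) = (\<Sum>S\<in>T2 M. \<Sum>x<u. of_bool (x \<in> S))"
    by (simp add: card_as_sum)
  also have "\<dots> = (\<Sum>x<u. \<Sum>S\<in>T2 M. of_bool (x \<in> S))" by (rule sum.swap)
  also have "\<dots> = (\<Sum>x<u. real M - 1)"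
  proof (rule sum.cong[OF refl])
    fix x assume "x \<in> {..<u}"
    hence "x < M" using assms by auto
    have "(\<Sum>S\<in>T2 M. of_bool (x \<in> S) :: real) = real (card {S \<in> T2 M. x \<in> S})"
      using T2_finite by (simp add: Int_def)
    also have "\<dots> = real M - 1" using cnt1[OF \<open>x < M\<close>] \<open>x < M\<close> by (simp add: of_nat_diff)
    finally show "(\<Sum>S\<in>T2 M. of_bool (x \<in> S) :: real) = real M - 1" .
  qed
  finally show ?thesis by simp
qed

lemma sum2:
  assumes "u \<le> M"
  shows "(\<Sum>S\<in>T2 M. real (card (S \<inter> {..<u}))^2) = real u * (real M - 1) + real u * (real u - 1)"
proof -
  have "(\<Sum>S\<in>T2 M. real (card (S \<inter> {..<u}))^2)
      = (\<Sum>S\<in>T2 M. \<Sum>x<u. \<Sum>y<u. of_bool (x \<in> S \<and> y \<in> S))"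
  proof (rule sum.cong[OF refl])
    fix S
    have "real (card (S \<inter> {..<u}))^2 = (\<Sum>x<u. of_bool (x \<in> S)) * (\<Sum>y<u. of_bool (y \<in> S))"
      unfolding power2_eq_square card_as_sum[OF finite_lessThan] ..
    also have "\<dots> = (\<Sum>x<u. \<Sum>y<u. of_bool (x \<in> S) * of_bool (y \<in> S))"
      by (rule sum_product)
    also have "\<dots> = (\<Sum>x<u. \<Sum>y<u. of_bool (x \<in> S \<and> y \<in> S))"
      by (intro sum.cong refl) auto
    finally show "real (card (S \<inter> {..<u}))^2 = (\<Sum>x<u. \<Sum>y<u. of_bool (x \<in> S \<and> y \<in> S))" .
  qed
  also have "\<dots> = (\<Sum>x<u. \<Sum>y<u. \<Sum>S\<in>T2 M. of_bool (x \<in> S \<and> y \<in> S))"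
    by (simp add: sum.swap[of _ "T2 M"])
  also have "\<dots> = (\<Sum>x<u. \<Sum>y<u. if x = y then real M - 1 else 1)"
  proof (intro sum.cong refl)
    fix x y assume "x \<in> {..<u}" "y \<in> {..<u}"
    hence xy: "x < M" "y < M" using assms by auto
    have "(\<Sum>S\<in>T2 M. of_bool (x \<in> S \<and> y \<in> S) :: real) = real (card {S \<in> T2 M. x \<in> S \<and> y \<in> S})"
      using T2_finite by (simp add: Int_def)
    also have "\<dots> = (if x = y then real M - 1 else 1)"
      using cnt1[OF xy(1)] cnt2[OF xy] xy by (auto simp: of_nat_diff)
    finally show "(\<Sum>S\<in>T2 M. of_bool (x \<in> S \<and> y \<in> S) :: real) = (if x = y then real M - 1 else 1)" .
  qed
  also have "\<dots> = (\<Sum>x<u. (real M - 1) + (real u - 1))"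
  proof (rule sum.cong[OF refl])
    fix x assume x: "x \<in> {..<u}"
    have "(\<Sum>y<u. if x = y then real M - 1 else 1) = (\<Sum>y<u. (if x = y then real M - 2 else 0) + 1)"
      by (intro sum.cong) auto
    also have "\<dots> = real M - 2 + real u" using x by (simp add: sum.distrib)
    finally show "(\<Sum>y<u. if x = y then real M - 1 else 1) = (real M - 1) + (real u - 1)" by simp
  qed
  finally show ?thesis by (simp add: algebra_simps)
qed




lemma card_le_u: "card (S \<inter> {..<u}) \<le> u"
  by (metis card_lessThan card_mono finite_lessThan inf_le2)

lemma step_exp:
  assumes "j + 2 \<le> n"
  shows "measure_pmf.expectation (urn_step n j u) f
     = (\<Sum>S\<in>T2 (n-j). f (u + 1 - card (S \<inter> {..<u}))) / real (card (T2 (n-j)))"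
proof -
  have ne: "T2 (n-j) \<noteq> {}" using assms by (intro T2_nonempty) auto
  show ?thesis using assms
    by (simp add: urn_step_def T2_def[symmetric] integral_pmf_of_set[OF ne T2_finite])
qed

lemma alg1:
  fixes M u :: real assumes "M \<ge> 2"
  shows "(M * (M - 1) / 2 * (u + 1) - u * (M - 1)) / (M * (M - 1) / 2) = u * (M - 2) / M + 1"
proof -
  have "M \<noteq> 0" "M - 1 \<noteq> 0" using assms by auto
  thus ?thesis by (simp add: field_simps)
qed

lemma alg2:
  fixes M u :: real assumes "M \<ge> 2"
  shows "(M * (M - 1) / 2 * (u + 1)^2 - 2 * (u + 1) * (u * (M - 1)) + (u * (M - 1) + u * (u - 1)))
          / (M * (M - 1) / 2)
     = (u + 1)^2 - 4 * u * (u + 1) / M + 2 * u * (M - 2 + u) / (M * (M - 1))"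
proof -
  have "M \<noteq> 0" "M - 1 \<noteq> 0" using assms by auto
  thus ?thesis by (simp add: field_simps)
qed

lemma step1:
  assumes "j + 2 \<le> n" "u + j \<le> n"
  shows "measure_pmf.expectation (urn_step n j u) real
     = real u * (real n - real j - 2) / (real n - real j) + 1"
proof -
  let ?M = "n - j"
  have uM: "u \<le> ?M" using assms by auto
  have "(\<Sum>S\<in>T2 ?M. real (u + 1 - card (S \<inter> {..<u})))
        = (\<Sum>S\<in>T2 ?M. (real u + 1) - real (card (S \<inter> {..<u})))"
  proof (intro sum.cong refl)
    fix S have "card (S \<inter> {..<u}) \<le> u + 1" using card_le_u[of S u] by linarith
    thus "real (u + 1 - card (S \<inter> {..<u})) = (real u + 1) - real (card (S \<inter> {..<u}))"
      by (simp add: of_nat_diff)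
  qed
  also have "\<dots> = real (card (T2 ?M)) * (real u + 1) - real u * (real ?M - 1)"
    by (simp add: sum_subtractf sum1[OF uM])
  finally have e: "(\<Sum>S\<in>T2 ?M. real (u + 1 - card (S \<inter> {..<u})))
     = real (card (T2 ?M)) * (real u + 1) - real u * (real ?M - 1)" .
  have M: "real ?M = real n - real j" "real n - real j \<ge> 2" using assms by (auto simp: of_nat_diff)
  show ?thesis
    unfolding step_exp[OF assms(1)] e T2_card M(1) using alg1[OF M(2)] by simp
qed

lemma step2:
  assumes "j + 2 \<le> n" "u + j \<le> n"
  shows "measure_pmf.expectation (urn_step n j u) (\<lambda>v. real v ^ 2)
     = (real u + 1)^2 - 4 * real u * (real u + 1) / (real n - real j)
       + 2 * real u * (real n - real j - 2 + real u) / ((real n - real j) * (real n - real j - 1))"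
proof -
  let ?M = "n - j"
  have uM: "u \<le> ?M" using assms by auto
  have "(\<Sum>S\<in>T2 ?M. real (u + 1 - card (S \<inter> {..<u}))^2)
        = (\<Sum>S\<in>T2 ?M. (real u + 1)^2 - 2 * (real u + 1) * real (card (S \<inter> {..<u}))
              + real (card (S \<inter> {..<u}))^2)"
  proof (intro sum.cong refl)
    fix S have "card (S \<inter> {..<u}) \<le> u + 1" using card_le_u[of S u] by linarith
    hence "real (u + 1 - card (S \<inter> {..<u})) = (real u + 1) - real (card (S \<inter> {..<u}))"
      by (simp add: of_nat_diff)
    thus "real (u + 1 - card (S \<inter> {..<u}))^2 = (real u + 1)^2 - 2 * (real u + 1) * real (card (S \<inter> {..<u}))
              + real (card (S \<inter> {..<u}))^2"
      by (simp add: power2_eq_square algebra_simps)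
  qed
  also have "\<dots> = real (card (T2 ?M)) * (real u + 1)^2 - 2 * (real u + 1) * (real u * (real ?M - 1))
      + (real u * (real ?M - 1) + real u * (real u - 1))"
    by (simp only: sum.distrib sum_subtractf sum1[OF uM] sum2[OF uM] sum_distrib_left[symmetric]
       sum_constant)
  finally have e: "(\<Sum>S\<in>T2 ?M. real (u + 1 - card (S \<inter> {..<u}))^2)
     = real (card (T2 ?M)) * (real u + 1)^2 - 2 * (real u + 1) * (real u * (real ?M - 1))
      + (real u * (real ?M - 1) + real u * (real u - 1))" .
  have M: "real ?M = real n - real j" "real n - real j \<ge> 2" using assms by (auto simp: of_nat_diff)
  show ?thesis
    unfolding step_exp[OF assms(1)] e T2_card M(1) using alg2[OF M(2)] by simp
qed

lemma set_step:
  assumes "j + 2 \<le> n"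
  shows "set_pmf (urn_step n j u) = (\<lambda>S. u + 1 - card (S \<inter> {..<u})) ` T2 (n - j)"
proof -
  have ne: "T2 (n-j) \<noteq> {}" using assms by (intro T2_nonempty) auto
  show ?thesis using assms ne T2_finite by (simp add: urn_step_def T2_def[symmetric])
qed

lemma finite_set_step: "finite (set_pmf (urn_step n j u))"
proof (cases "j + 2 \<le> n")
  case True thus ?thesis unfolding set_step[OF True] using T2_finite by (rule_tac finite_imageI)
next
  case False thus ?thesis by (simp add: urn_step_def)
qed

lemma step_support:
  assumes "v \<in> set_pmf (urn_step n j u)" "u + j \<le> n" "j < n"
  shows "v + Suc j \<le> n"
proof (cases "j + 2 \<le> n")
  case True
  then obtain S where S: "S \<in> T2 (n-j)" "v = u + 1 - card (S \<inter> {..<u})"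
    using assms set_step by auto
  have "S - {..<u} \<subseteq> {u..<n-j}" using S unfolding T2_def by auto
  hence "card (S - {..<u}) \<le> n - j - u"
    using card_mono[OF finite_atLeastLessThan, of "S - {..<u}" u "n-j"] by simp
  moreover have "card S = card (S \<inter> {..<u}) + card (S - {..<u})"
  proof -
    have "finite S" using S unfolding T2_def by (auto intro: finite_subset)
    thus ?thesis by (rule card_Int_Diff)
  qed
  moreover have "card S = 2" using S unfolding T2_def by auto
  ultimately show ?thesis using S assms True by linarith
next
  case False
  thus ?thesis using assms by (auto simp: urn_step_def)
qed




definition mm :: "real \<Rightarrow> real \<Rightarrow> real" where "mm N K = K * (N - K) / (N - 1)"
definition VV :: "real \<Rightarrow> real \<Rightarrow> real \<Rightarrow> real" where
  "VV N K L = K * (K - 1) * (N - L) * (N - L - 1) / ((N - 1)^2 * (N - 2))"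

lemma alg_m:
  fixes N K :: real assumes "N \<ge> 3" "N - K \<ge> 2"
  shows "mm N K * ((N - K - 2) / (N - K)) + 1 = mm N (K + 1)"
proof -
  have "N - 1 \<noteq> 0" "N - K \<noteq> 0" using assms by auto
  thus ?thesis unfolding mm_def by (simp add: divide_simps) algebra
qed

lemma alg_c:
  fixes N K L :: real assumes "N \<ge> 3" "N - L \<ge> 2"
  shows "(VV N K L + mm N K * mm N L) * ((N - L - 2) / (N - L)) + mm N K
       = VV N K (L + 1) + mm N K * mm N (L + 1)"
proof -
  have "N - 1 \<noteq> 0" "N - L \<noteq> 0" "N - 2 \<noteq> 0" using assms by auto
  thus ?thesis unfolding mm_def VV_def by (simp add: divide_simps) algebra
qed

lemma alg_s:
  fixes N K :: real assumes "N \<ge> 3" "N - K \<ge> 2"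
  shows "(VV N K K + (mm N K)^2) * (1 - 4 / (N - K) + 2 / ((N - K) * (N - K - 1)))
        + mm N K * (2 - 4 / (N - K) + 2 * (N - K - 2) / ((N - K) * (N - K - 1))) + 1
       = VV N (K + 1) (K + 1) + (mm N (K + 1))^2"
proof -
  have "N - 1 \<noteq> 0" "N - K \<noteq> 0" "N - 2 \<noteq> 0" "N - K - 1 \<noteq> 0" using assms by auto
  thus ?thesis unfolding mm_def VV_def by (simp add: divide_simps) algebra
qed

lemma alg_step2:
  fixes M u :: real assumes "M \<ge> 2"
  shows "(u + 1)^2 - 4 * u * (u + 1) / M + 2 * u * (M - 2 + u) / (M * (M - 1))
    = u^2 * (1 - 4 / M + 2 / (M * (M - 1))) + u * (2 - 4 / M + 2 * (M - 2) / (M * (M - 1))) + 1"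
proof -
  have "M \<noteq> 0" "M - 1 \<noteq> 0" using assms by auto
  thus ?thesis by (simp add: divide_simps) algebra
qed




lemma exp_cong:
  "(\<And>x. x \<in> set_pmf p \<Longrightarrow> f x = g x) \<Longrightarrow>
   measure_pmf.expectation p f = measure_pmf.expectation p (g :: _ \<Rightarrow> real)"
  by (rule integral_cong_AE) (auto simp: AE_measure_pmf_iff)

lemma exp_bind:
  assumes "finite (set_pmf p)" "\<And>x. x \<in> set_pmf p \<Longrightarrow> finite (set_pmf (f x))"
  shows "measure_pmf.expectation (bind_pmf p f) (h :: _ \<Rightarrow> real)
       = measure_pmf.expectation p (\<lambda>x. measure_pmf.expectation (f x) h)"
  using assms
  by (subst pmf_expectation_bind[of "set_pmf p"], simp_all,
      subst integral_measure_pmf[of "set_pmf p"], simp_all)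

lemma lin:
  assumes "finite (set_pmf p)"
  shows "measure_pmf.expectation p (\<lambda>x. f x * a + g x * b + c)
       = measure_pmf.expectation p f * a + measure_pmf.expectation p g * b + (c::real)"
proof -
  have i: "integrable (measure_pmf p) h" for h :: "_ \<Rightarrow> real"
    using assms by (rule integrable_measure_pmf_finite)
  show ?thesis
    by (simp add: Bochner_Integration.integral_add[OF i i] Bochner_Integration.integral_add[OF Bochner_Integration.integrable_add[OF i i] i])
qed

lemma path_len: "xs \<in> set_pmf (urn_path n j) \<Longrightarrow> length xs = Suc j"
  by (induction j arbitrary: xs) auto

lemma path_fin: "finite (set_pmf (urn_path n j))"
  by (induction j) (auto simp: finite_set_step)

lemma path_bound:
  "j \<le> n \<Longrightarrow> xs \<in> set_pmf (urn_path n j) \<Longrightarrow> i \<le> j \<Longrightarrow> xs ! i + i \<le> n"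
proof (induction j arbitrary: xs i)
  case 0 thus ?case by auto
next
  case (Suc j)
  then obtain ys v where ys: "ys \<in> set_pmf (urn_path n j)" "v \<in> set_pmf (urn_step n j (last ys))"
    "xs = ys @ [v]" by auto
  have len: "length ys = Suc j" using path_len[OF ys(1)] .
  show ?case
  proof (cases "i = Suc j")
    case True
    have "ys \<noteq> []" using len by auto
    hence "last ys = ys ! j" using len by (simp add: last_conv_nth)
    hence "last ys + j \<le> n" using Suc.IH[OF _ ys(1), of j] Suc.prems by simp
    hence "v + Suc j \<le> n" using step_support[OF ys(2)] Suc.prems by simp
    thus ?thesis using True ys(3) len by (simp add: nth_append)
  next
    case False
    hence "i \<le> j" using Suc.prems by simp
    thus ?thesis using Suc.IH[OF _ ys(1)] Suc.prems ys(3) len by (simp add: nth_append)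
  qed
qed

lemma path_take: "map_pmf (take (Suc j)) (urn_path n (Suc j)) = urn_path n j"
proof -
  have "map_pmf (take (Suc j)) (urn_path n (Suc j))
      = bind_pmf (urn_path n j) (\<lambda>xs. map_pmf (\<lambda>_. xs) (urn_step n j (last xs)))"
    unfolding urn_path.simps map_bind_pmf pmf.map_comp o_def
  proof (intro bind_pmf_cong refl)
    fix xs assume "xs \<in> set_pmf (urn_path n j)"
    hence "length xs = Suc j" by (rule path_len)
    thus "map_pmf (\<lambda>x. take (Suc j) (xs @ [x])) (urn_step n j (last xs)) =
          map_pmf (\<lambda>_. xs) (urn_step n j (last xs))" by simp
  qed
  also have "\<dots> = bind_pmf (urn_path n j) return_pmf"
    by (simp add: map_pmf_const)
  finally show ?thesis by (simp add: bind_return_pmf')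
qed

lemma path_marg: "i \<le> j \<Longrightarrow> map_pmf (take (Suc i)) (urn_path n j) = urn_path n i"
proof (induction j)
  case 0 thus ?case by simp
next
  case (Suc j)
  show ?case
  proof (cases "i = Suc j")
    case True
    have "map_pmf (take (Suc i)) (urn_path n (Suc j)) = map_pmf id (urn_path n (Suc j))"
      using path_len True by (intro pmf.map_cong refl) fastforce
    thus ?thesis using True by simp
  next
    case False
    hence ij: "i \<le> j" using Suc.prems by simp
    have "map_pmf (take (Suc i)) (urn_path n (Suc j))
        = map_pmf (take (Suc i)) (map_pmf (take (Suc j)) (urn_path n (Suc j)))"
      unfolding pmf.map_comp o_def take_take using ij by (simp add: min_absorb1 del: urn_path.simps)
    also have "\<dots> = map_pmf (take (Suc i)) (urn_path n j)" by (simp only: path_take)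
    finally show ?thesis using Suc.IH[OF ij] by simp
  qed
qed

lemma exp_marg:
  "i \<le> j \<Longrightarrow> measure_pmf.expectation (urn_path n j) (\<lambda>xs. F (take (Suc i) xs))
      = measure_pmf.expectation (urn_path n i) (F :: _ \<Rightarrow> real)"
  by (subst path_marg[symmetric], assumption) simp

lemma exp_step:
  "measure_pmf.expectation (urn_path n (Suc j)) h
   = measure_pmf.expectation (urn_path n j)
       (\<lambda>xs. measure_pmf.expectation (urn_step n j (last xs)) (\<lambda>v. (h (xs @ [v]) :: real)))"
  by (simp add: exp_bind path_fin finite_set_step)




abbreviation EM :: "nat \<Rightarrow> nat \<Rightarrow> real" where
  "EM n k \<equiv> measure_pmf.expectation (urn_path n k) (\<lambda>xs. real (xs ! k))"
abbreviation ES :: "nat \<Rightarrow> nat \<Rightarrow> real" where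
  "ES n k \<equiv> measure_pmf.expectation (urn_path n k) (\<lambda>xs. real (xs ! k) ^ 2)"
abbreviation EC :: "nat \<Rightarrow> nat \<Rightarrow> nat \<Rightarrow> real" where
  "EC n k l \<equiv> measure_pmf.expectation (urn_path n l) (\<lambda>xs. real (xs ! k) * real (xs ! l))"

lemma path_last: "xs \<in> set_pmf (urn_path n j) \<Longrightarrow> last xs = xs ! j"
proof -
  assume "xs \<in> set_pmf (urn_path n j)"
  hence l: "length xs = Suc j" by (rule path_len)
  hence "xs \<noteq> []" by auto
  thus ?thesis using l by (simp add: last_conv_nth)
qed

lemma nth_app_last: "xs \<in> set_pmf (urn_path n j) \<Longrightarrow> (xs @ [v]) ! Suc j = v"
  using path_len by (simp add: nth_append)

lemma nth_app_le: "xs \<in> set_pmf (urn_path n j) \<Longrightarrow> k \<le> j \<Longrightarrow> (xs @ [v]) ! k = xs ! k"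
  using path_len by (simp add: nth_append)

lemma rec_m:
  assumes "k + 2 \<le> n"
  shows "EM n (Suc k) = EM n k * ((real n - real k - 2) / (real n - real k)) + 1"
proof -
  have "EM n (Suc k) = measure_pmf.expectation (urn_path n k)
          (\<lambda>xs. measure_pmf.expectation (urn_step n k (last xs)) (\<lambda>v. real ((xs @ [v]) ! Suc k)))"
    by (rule exp_step)
  also have "\<dots> = measure_pmf.expectation (urn_path n k)
          (\<lambda>xs. real (xs ! k) * ((real n - real k - 2) / (real n - real k)) + real (xs ! k) * 0 + 1)"
  proof (rule exp_cong)
    fix xs assume xs: "xs \<in> set_pmf (urn_path n k)"
    have b: "xs ! k + k \<le> n" using path_bound[OF _ xs] assms by simp
    show "measure_pmf.expectation (urn_step n k (last xs)) (\<lambda>v. real ((xs @ [v]) ! Suc k))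
       = real (xs ! k) * ((real n - real k - 2) / (real n - real k)) + real (xs ! k) * 0 + 1"
      using step1[OF assms b] by (simp add: nth_app_last[OF xs] path_last[OF xs])
  qed
  also have "\<dots> = EM n k * ((real n - real k - 2) / (real n - real k)) + 1"
    by (subst lin[OF path_fin]) simp
  finally show ?thesis .
qed

lemma rec_s:
  assumes "k + 2 \<le> n"
  shows "ES n (Suc k) = ES n k * (1 - 4 / (real n - real k) + 2 / ((real n - real k) * (real n - real k - 1)))
     + EM n k * (2 - 4 / (real n - real k) + 2 * (real n - real k - 2) / ((real n - real k) * (real n - real k - 1))) + 1"
proof -
  have M: "real n - real k \<ge> 2" using assms by simp
  have "ES n (Suc k) = measure_pmf.expectation (urn_path n k)
          (\<lambda>xs. measure_pmf.expectation (urn_step n k (last xs)) (\<lambda>v. real ((xs @ [v]) ! Suc k) ^ 2))"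
    by (rule exp_step)
  also have "\<dots> = measure_pmf.expectation (urn_path n k)
          (\<lambda>xs. real (xs ! k) ^ 2 * (1 - 4 / (real n - real k) + 2 / ((real n - real k) * (real n - real k - 1)))
     + real (xs ! k) * (2 - 4 / (real n - real k) + 2 * (real n - real k - 2) / ((real n - real k) * (real n - real k - 1))) + 1)"
  proof (rule exp_cong)
    fix xs assume xs: "xs \<in> set_pmf (urn_path n k)"
    have b: "xs ! k + k \<le> n" using path_bound[OF _ xs] assms by simp
    show "measure_pmf.expectation (urn_step n k (last xs)) (\<lambda>v. real ((xs @ [v]) ! Suc k) ^ 2)
       = real (xs ! k) ^ 2 * (1 - 4 / (real n - real k) + 2 / ((real n - real k) * (real n - real k - 1)))
     + real (xs ! k) * (2 - 4 / (real n - real k) + 2 * (real n - real k - 2) / ((real n - real k) * (real n - real k - 1))) + 1"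
      using step2[OF assms b] alg_step2[OF M, of "real (xs ! k)"]
      by (simp add: nth_app_last[OF xs] path_last[OF xs])
  qed
  also have "\<dots> = ES n k * (1 - 4 / (real n - real k) + 2 / ((real n - real k) * (real n - real k - 1)))
     + EM n k * (2 - 4 / (real n - real k) + 2 * (real n - real k - 2) / ((real n - real k) * (real n - real k - 1))) + 1"
    by (rule lin[OF path_fin])
  finally show ?thesis .
qed

lemma rec_c:
  assumes "k \<le> l" "l + 2 \<le> n"
  shows "EC n k (Suc l) = EC n k l * ((real n - real l - 2) / (real n - real l)) + EM n k"
proof -
  have "EC n k (Suc l) = measure_pmf.expectation (urn_path n l)
          (\<lambda>xs. measure_pmf.expectation (urn_step n l (last xs))
             (\<lambda>v. real ((xs @ [v]) ! k) * real ((xs @ [v]) ! Suc l)))"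
    by (rule exp_step)
  also have "\<dots> = measure_pmf.expectation (urn_path n l)
          (\<lambda>xs. (real (xs ! k) * real (xs ! l)) * ((real n - real l - 2) / (real n - real l))
              + real (xs ! k) * 1 + 0)"
  proof (rule exp_cong)
    fix xs assume xs: "xs \<in> set_pmf (urn_path n l)"
    have b: "xs ! l + l \<le> n" using path_bound[OF _ xs] assms by simp
    have "measure_pmf.expectation (urn_step n l (last xs))
             (\<lambda>v. real ((xs @ [v]) ! k) * real ((xs @ [v]) ! Suc l))
        = measure_pmf.expectation (urn_step n l (xs ! l)) (\<lambda>v. real (xs ! k) * real v)"
      by (simp add: nth_app_last[OF xs] nth_app_le[OF xs assms(1)] path_last[OF xs])
    also have "\<dots> = real (xs ! k) * measure_pmf.expectation (urn_step n l (xs ! l)) real"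
      by (rule integral_mult_right_zero)
    also have "\<dots> = (real (xs ! k) * real (xs ! l)) * ((real n - real l - 2) / (real n - real l))
              + real (xs ! k) * 1 + 0"
      using step1[OF assms(2) b] by (simp add: algebra_simps)
    finally show "measure_pmf.expectation (urn_step n l (last xs))
             (\<lambda>v. real ((xs @ [v]) ! k) * real ((xs @ [v]) ! Suc l))
        = (real (xs ! k) * real (xs ! l)) * ((real n - real l - 2) / (real n - real l))
              + real (xs ! k) * 1 + 0" .
  qed
  also have "\<dots> = EC n k l * ((real n - real l - 2) / (real n - real l))
       + measure_pmf.expectation (urn_path n l) (\<lambda>xs. real (xs ! k))"
    by (subst lin[OF path_fin]) simp
  also have "measure_pmf.expectation (urn_path n l) (\<lambda>xs. real (xs ! k)) = EM n k"
    using exp_marg[OF assms(1), of n "\<lambda>ys. real (ys ! k)"] by simp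
  finally show ?thesis .
qed

lemma closed_m:
  assumes "n \<ge> 3" "k + 1 \<le> n"
  shows "EM n k = mm (real n) (real k)"
  using assms(2)
proof (induction k)
  case 0 thus ?case by (simp add: mm_def)
next
  case (Suc k)
  have kn: "k + 1 \<le> n" using Suc.prems by simp
  have "EM n (Suc k) = EM n k * ((real n - real k - 2) / (real n - real k)) + 1"
    using Suc.prems by (intro rec_m) simp
  also have "\<dots> = mm (real n) (real k) * ((real n - real k - 2) / (real n - real k)) + 1"
    unfolding Suc.IH[OF kn] ..
  also have "\<dots> = mm (real n) (real k + 1)"
    using Suc.prems assms(1) by (intro alg_m) auto
  finally show ?case by (simp add: add.commute)
qed

lemma closed_s:
  assumes "n \<ge> 3" "k + 1 \<le> n"
  shows "ES n k = VV (real n) (real k) (real k) + (mm (real n) (real k))^2"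
  using assms(2)
proof (induction k)
  case 0 thus ?case by (simp add: mm_def VV_def)
next
  case (Suc k)
  have kn: "k + 1 \<le> n" using Suc.prems by simp
  have "ES n (Suc k) = ES n k * (1 - 4 / (real n - real k) + 2 / ((real n - real k) * (real n - real k - 1)))
     + EM n k * (2 - 4 / (real n - real k) + 2 * (real n - real k - 2) / ((real n - real k) * (real n - real k - 1))) + 1"
    using Suc.prems by (intro rec_s) simp
  also have "\<dots> = (VV (real n) (real k) (real k) + (mm (real n) (real k))^2) * (1 - 4 / (real n - real k) + 2 / ((real n - real k) * (real n - real k - 1)))
     + mm (real n) (real k) * (2 - 4 / (real n - real k) + 2 * (real n - real k - 2) / ((real n - real k) * (real n - real k - 1))) + 1"
    unfolding Suc.IH[OF kn] closed_m[OF assms(1) kn] ..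
  also have "\<dots> = VV (real n) (real k + 1) (real k + 1) + (mm (real n) (real k + 1))^2"
    using Suc.prems assms(1) by (intro alg_s) auto
  finally show ?case by (simp add: add.commute)
qed

lemma closed_c:
  assumes "n \<ge> 3" "k \<le> l" "l + 1 \<le> n"
  shows "EC n k l = VV (real n) (real k) (real l) + mm (real n) (real k) * mm (real n) (real l)"
  using assms(2,3)
proof (induction l)
  case 0 thus ?case using closed_s[OF assms(1), of 0] by (simp add: power2_eq_square)
next
  case (Suc l)
  show ?case
  proof (cases "k = Suc l")
    case True thus ?thesis using closed_s[OF assms(1) Suc.prems(2)] by (simp add: power2_eq_square)
  next
    case False
    hence kl: "k \<le> l" "l + 1 \<le> n" using Suc.prems by auto
    have "EC n k (Suc l) = EC n k l * ((real n - real l - 2) / (real n - real l)) + EM n k"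
      using Suc.prems kl by (intro rec_c) auto
    also have "\<dots> = (VV (real n) (real k) (real l) + mm (real n) (real k) * mm (real n) (real l))
       * ((real n - real l - 2) / (real n - real l)) + mm (real n) (real k)"
      unfolding Suc.IH[OF kl] closed_m[OF assms(1) order.trans[OF add_right_mono[OF kl(1)] kl(2)]] ..
    also have "\<dots> = VV (real n) (real k) (real l + 1) + mm (real n) (real k) * mm (real n) (real l + 1)"
      using Suc.prems assms(1) by (intro alg_c) auto
    finally show ?thesis by (simp add: add.commute)
  qed
qed




lemma lin3:
  assumes "finite (set_pmf p)"
  shows "measure_pmf.expectation p (\<lambda>x. f x * a + g x * b + h x * c + d)
       = measure_pmf.expectation p f * a + measure_pmf.expectation p g * b
         + measure_pmf.expectation p h * c + (d::real)"
proof -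
  have i: "integrable (measure_pmf p) h" for h :: "_ \<Rightarrow> real"
    using assms by (rule integrable_measure_pmf_finite)
  show ?thesis
    by (simp add: Bochner_Integration.integral_add[OF i i]
        Bochner_Integration.integral_add[OF Bochner_Integration.integrable_add[OF i i] i]
        Bochner_Integration.integral_add[OF Bochner_Integration.integrable_add[OF
           Bochner_Integration.integrable_add[OF i i] i] i])
qed

lemma urn_exp1:
  assumes "k \<le> n"
  shows "measure_pmf.expectation (urn n) (\<lambda>xs. real (xs ! k)) = EM n k"
  using exp_marg[OF assms, of n "\<lambda>ys. real (ys ! k)"] by (simp add: urn_def)

lemma urn_exp2:
  assumes "k \<le> l" "l \<le> n"
  shows "measure_pmf.expectation (urn n) (\<lambda>xs. real (xs ! k) * real (xs ! l)) = EC n k l"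
  using exp_marg[OF assms(2), of n "\<lambda>ys. real (ys ! k) * real (ys ! l)"] assms(1)
  by (simp add: urn_def)

lemma EM_n: "EM n n = 0"
proof -
  have "EM n n = measure_pmf.expectation (urn_path n n) (\<lambda>xs. 0)"
    by (rule exp_cong) (use path_bound[of n n] in fastforce)
  thus ?thesis by simp
qed

theorem proposition6:
  fixes n k l :: nat
  assumes "n \<ge> 3" and "k \<le> l" and "l \<le> n"
  shows "measure_pmf.expectation (urn n) (\<lambda>xs. real (xs ! k))
           = real k * (real n - real k) / (real n - 1)
         \<and> pmf_cov (urn n) (\<lambda>xs. real (xs ! k)) (\<lambda>xs. real (xs ! l))
           = real k * (real k - 1) * (real n - real l) * (real n - real l - 1)
             / ((real n - 1)^2 * (real n - 2))"
proof -
  have kn: "k \<le> n" using assms by simp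
  have Ek: "measure_pmf.expectation (urn n) (\<lambda>xs. real (xs ! k)) = mm (real n) (real k)"
    if "k \<le> n" for k
  proof (cases "k = n")
    case True thus ?thesis using urn_exp1[OF that] EM_n by (simp add: mm_def)
  next
    case False thus ?thesis using urn_exp1[OF that] closed_m[OF assms(1)] that by simp
  qed
  have part1: "measure_pmf.expectation (urn n) (\<lambda>xs. real (xs ! k))
           = real k * (real n - real k) / (real n - 1)"
    using Ek[OF kn] by (simp add: mm_def)
  have part2: "pmf_cov (urn n) (\<lambda>xs. real (xs ! k)) (\<lambda>xs. real (xs ! l))
           = VV (real n) (real k) (real l)"
  proof (cases "l = n")
    case True
    have "pmf_cov (urn n) (\<lambda>xs. real (xs ! k)) (\<lambda>xs. real (xs ! l))
        = measure_pmf.expectation (urn n) (\<lambda>xs. 0)"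
      unfolding pmf_cov_def
    proof (rule exp_cong)
      fix xs assume xs: "xs \<in> set_pmf (urn n)"
      have "xs ! n = 0" using path_bound[of n n xs n] xs by (simp add: urn_def)
      moreover have "measure_pmf.expectation (urn n) (\<lambda>xs. real (xs ! l)) = 0"
        using Ek[of l] assms True by (simp add: mm_def)
      ultimately show "(real (xs ! k) - measure_pmf.expectation (urn n) (\<lambda>xs. real (xs ! k))) *
           (real (xs ! l) - measure_pmf.expectation (urn n) (\<lambda>xs. real (xs ! l))) = 0"
        using True by simp
    qed
    thus ?thesis using True by (simp add: VV_def)
  next
    case False
    hence ln: "l + 1 \<le> n" using assms by simp
    define a where "a = measure_pmf.expectation (urn n) (\<lambda>xs. real (xs ! k))"
    define b where "b = measure_pmf.expectation (urn n) (\<lambda>xs. real (xs ! l))"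
    have "pmf_cov (urn n) (\<lambda>xs. real (xs ! k)) (\<lambda>xs. real (xs ! l))
       = measure_pmf.expectation (urn n)
           (\<lambda>xs. (real (xs ! k) * real (xs ! l)) * 1 + real (xs ! k) * (- b) + real (xs ! l) * (- a) + a * b)"
      unfolding pmf_cov_def a_def[symmetric] b_def[symmetric]
      by (rule exp_cong) (simp add: algebra_simps)
    also have "\<dots> = EC n k l - a * b"
      by (subst lin3[OF path_fin[of n n, folded urn_def]])
        (simp add: urn_exp2[OF assms(2,3)] a_def[symmetric] b_def[symmetric])
    also have "\<dots> = VV (real n) (real k) (real l)"
      using closed_c[OF assms(1,2) ln] Ek[OF kn] Ek[OF assms(3)] unfolding a_def b_def by simp
    finally show ?thesis .
  qed
  show ?thesis using part1 part2 by (simp add: VV_def)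
qed


end
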